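(* For every $n\ge 0$, a permutation $\pi$ of $\{1,\ldots,n\}$ can be produced as the output of a strictly locked jump queue with input $1,2,\ldots,n$ if and only if $\pi$ avoids both patterns $4231$ and $42513$.
   Context: A permutation $\pi=\pi_1\cdots\pi_n$ contains a pattern $\alpha=\alpha_1\cdots\alpha_k$ (a permutation of $\{1,\ldots,k\}$) if there are indices $i_1<\cdots<i_k$ with $\pi_{i_r}<\pi_{i_s}$ iff $\alpha_r<\alpha_s$; otherwise $\pi$ avoids $\alpha$. Jump queues. The input is $1,2,\ldots,n$, and at each step one may either append the next input element to the rear of the queue, or remove (output) some element of the queue; the sequence of outputs forms a permutation of $1,\ldots,n$ once all elements have been output. The front element of the queue may always be output. Outputting an element other than the front element is called a jump, and an element may jump only if it is not locked. When an element $x$ jumps, every element currently in the queue behind $x$ (closer to the rear) becomes locked; this lock is released at the moment when all elements that were in front of $x$ at the time of the jump have been output. An element is locked as long as at least one lock applying to it is in force. (In particular jumping the rear element locks nothing.) - In a strictly locked jump queue, additionally, any element appended to the queue while the queue contains some locked element is itself locked, and is released under the same condition(s) as those locks. *)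

theory Defs
  imports Main
begin

definition contains_pattern :: "nat list \<Rightarrow> nat list \<Rightarrow> bool" where
  "contains_pattern \<pi> \<alpha> \<longleftrightarrow>
     (\<exists>f :: nat \<Rightarrow> nat. strict_mono_on {..<length \<alpha>} f
        \<and> (\<forall>r<length \<alpha>. f r < length \<pi>)
        \<and> (\<forall>r<length \<alpha>. \<forall>s<length \<alpha>.
              (\<pi> ! f r < \<pi> ! f s) \<longleftrightarrow> (\<alpha> ! r < \<alpha> ! s)))"

definition avoids_pattern :: "nat list \<Rightarrow> nat list \<Rightarrow> bool" where
  "avoids_pattern \<pi> \<alpha> \<longleftrightarrow> \<not> contains_pattern \<pi> \<alpha>"

text \<open>Locks are recorded as pairs (y, R): element y is locked until every
element of R has been output (i.e. no element of R is in the queue any more).\<close>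

definition locked :: "nat list \<Rightarrow> (nat \<times> nat set) set \<Rightarrow> nat \<Rightarrow> bool" where
  "locked q L y \<longleftrightarrow> (\<exists>R. (y, R) \<in> L \<and> R \<inter> set q \<noteq> {})"

text \<open>Reachable configurations: remaining input, queue (front first),
output so far, locks.\<close>

inductive sljq_reach :: "nat \<Rightarrow> nat list \<Rightarrow> nat list \<Rightarrow> nat list \<Rightarrow> (nat \<times> nat set) set \<Rightarrow> bool"
  for n :: nat where
  init: "sljq_reach n [1..<Suc n] [] [] {}"
| push: "sljq_reach n (e # inp) q out L \<Longrightarrow>
         sljq_reach n inp (q @ [e]) out
           (L \<union> (if (\<exists>y\<in>set q. locked q L y)
                 then {(e, R) | R. \<exists>y\<in>set q. (y, R) \<in> L \<and> R \<inter> set q \<noteq> {}}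
                 else {}))"
| pop: "sljq_reach n inp (fr @ x # bk) out L \<Longrightarrow>
        (fr = [] \<or> \<not> locked (fr @ x # bk) L x) \<Longrightarrow>
        sljq_reach n inp (fr @ bk) (out @ [x]) (L \<union> {(y, set fr) | y. y \<in> set bk})"

definition sljq_output :: "nat \<Rightarrow> nat list \<Rightarrow> bool" where
  "sljq_output n \<pi> \<longleftrightarrow> (\<exists>L. sljq_reach n [] [] \<pi> L)"

end

theory Submission
  imports Defs
begin

lemma filter_remove:
  assumes "filter P xs = fr @ x # bk" "distinct xs"
  shows "filter (\<lambda>v. P v \<and> v \<noteq> x) xs = fr @ bk"
proof -
  have d: "distinct (fr @ x # bk)" using assms distinct_filter by metis
  have f1: "filter (\<lambda>v. v \<noteq> x) fr = fr" using d by (intro filter_True) auto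
  have f2: "filter (\<lambda>v. v \<noteq> x) bk = bk" using d by (intro filter_True) auto
  have "filter (\<lambda>v. P v \<and> v \<noteq> x) xs = filter (\<lambda>v. v \<noteq> x) (filter P xs)"
    by (simp add: filter_filter conj_commute)
  also have "\<dots> = fr @ bk" using f1 f2 by (simp add: assms(1))
  finally show ?thesis .
qed

lemma basic:
  "sljq_reach n inp q out L \<Longrightarrow> \<exists>k\<le>n. inp = [Suc k..<Suc n] \<and>
     q = filter (\<lambda>v. v \<notin> set out) [1..<Suc k] \<and> distinct out \<and> set out \<subseteq> {1..k}"
proof (induction rule: sljq_reach.induct)
  case init
  then show ?case by auto
next
  case (push e inp q out L)
  from push.IH obtain k where k: "k \<le> n" "e # inp = [Suc k..<Suc n]"
     "q = filter (\<lambda>v. v \<notin> set out) [1..<Suc k]" "distinct out" "set out \<subseteq> {1..k}" by blast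
  from k(2) have e: "e = Suc k" "k < n" "inp = [Suc (Suc k)..<Suc n]"
    using upt_eq_Cons_conv[of "Suc k" "Suc n" e inp] by auto
  have "Suc k \<notin> set out" using k(5) by auto
  then have "q @ [e] = filter (\<lambda>v. v \<notin> set out) [1..<Suc (Suc k)]"
    using k(3) e by simp
  moreover have "set out \<subseteq> {1..Suc k}" using k(5) by auto
  moreover have "Suc k \<le> n" using e(2) by simp
  ultimately show ?case using k(4) e(3) by blast
next
  case (pop inp fr x bk out L)
  from pop.IH obtain k where k: "k \<le> n" "inp = [Suc k..<Suc n]"
     "fr @ x # bk = filter (\<lambda>v. v \<notin> set out) [1..<Suc k]" "distinct out" "set out \<subseteq> {1..k}" by metis
  have xin: "x \<in> set (filter (\<lambda>v. v \<notin> set out) [1..<Suc k])" using k(3)[symmetric] by simp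
  have "filter (\<lambda>v. v \<notin> set out \<and> v \<noteq> x) [1..<Suc k] = fr @ bk"
    using filter_remove[OF k(3)[symmetric]] by simp
  moreover have "(\<lambda>v. v \<notin> set (out @ [x])) = (\<lambda>v. v \<notin> set out \<and> v \<noteq> x)" by auto
  ultimately have q2: "fr @ bk = filter (\<lambda>v. v \<notin> set (out @ [x])) [1..<Suc k]" by simp
  have x2: "x \<notin> set out" "1 \<le> x" "x \<le> k" using xin by auto
  have "distinct (out @ [x])" using k(4) x2 by simp
  moreover have "set (out @ [x]) \<subseteq> {1..k}" using k(5) x2 by auto
  ultimately show ?case using k(1,2) q2 by blast
qed


definition Rs :: "nat list \<Rightarrow> nat \<Rightarrow> nat set" where
  "Rs out s = {v. 0 < v \<and> v < out ! s \<and> v \<notin> set (take s out)}"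

definition LB :: "nat list \<Rightarrow> nat list \<Rightarrow> (nat \<times> nat set) set \<Rightarrow> bool" where
  "LB out q L \<longleftrightarrow> (\<forall>s r z. s < length out \<longrightarrow> r < s \<longrightarrow> out ! s < z \<longrightarrow> z < out ! r \<longrightarrow>
      z \<notin> set (take (Suc s) out) \<longrightarrow> Rs out s \<inter> set q \<noteq> {} \<longrightarrow>
      z \<in> set q \<and> (\<forall>y\<in>set q. out ! s < y \<longrightarrow> (y, Rs out s) \<in> L))"

definition PN :: "nat list \<Rightarrow> bool" where
  "PN out \<longleftrightarrow> \<not> (\<exists>r s t z a. r < s \<and> s < t \<and> t < length out \<and> out ! s < z \<and> z < out ! r \<and>
      z \<notin> set (take (Suc s) out) \<and> out ! s < out ! t \<and> 0 < a \<and> a < out ! s \<and>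
      a \<notin> set (take (Suc t) out))"

lemma sorted_q: "sorted_wrt (<) (filter P [1..<Suc k])"
  by (intro sorted_wrt_filter) (simp del: upt_Suc add: sorted_wrt_upt)

lemma split_sorted:
  assumes "sorted_wrt (<) (fr @ x # bk)"
  shows "\<forall>v\<in>set fr. v < x" "\<forall>v\<in>set bk. x < v"
  using assms by (auto simp: sorted_wrt_append)

lemma set_q: "set (filter (\<lambda>v. v \<notin> set out) [1..<Suc k]) = {v. 1 \<le> v \<and> v \<le> k \<and> v \<notin> set out}"
  by auto

lemma app_nth: "s < length out \<Longrightarrow> (out @ [x]) ! s = out ! s"
  by (simp add: nth_append)
lemma app_take: "s < length out \<Longrightarrow> take (Suc s) (out @ [x]) = take (Suc s) out"
  by simp
lemma app_take2: "s < length out \<Longrightarrow> take s (out @ [x]) = take s out"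
  by simp
lemma app_Rs: "s < length out \<Longrightarrow> Rs (out @ [x]) s = Rs out s"
  by (simp add: Rs_def nth_append)

lemma blocked:
  assumes q: "q = filter (\<lambda>v. v \<notin> set out) [1..<Suc k]" and so: "set out \<subseteq> {1..k}"
    and lb: "LB out q L" and qs: "q = fr @ x # bk"
    and s: "s < length out" "r < s" "out ! s < z" "z < out ! r" "z \<notin> set (take (Suc s) out)"
    and a: "a \<in> Rs out s" "a \<in> set q" and x: "out ! s < x"
  shows "fr \<noteq> [] \<and> locked q L x"
proof -
  have ne: "Rs out s \<inter> set q \<noteq> {}" using a by auto
  have xq: "x \<in> set q" using qs by simp
  have "(x, Rs out s) \<in> L" using lb s ne xq x unfolding LB_def by blast
  then have lk: "locked q L x" using ne unfolding locked_def by blast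
  have srt: "sorted_wrt (<) (fr @ x # bk)" using sorted_q q qs by metis
  have "a < x" using a(1) x unfolding Rs_def by auto
  then have "a \<in> set fr" using a(2) qs split_sorted(2)[OF srt] by auto
  then show ?thesis using lk by auto
qed

lemma inv1: "sljq_reach n inp q out L \<Longrightarrow> LB out q L \<and> PN out"
proof (induction rule: sljq_reach.induct)
  case init
  then show ?case by (simp add: LB_def PN_def)
next
  case (push e inp q out L)
  from basic[OF push.hyps] obtain k where k: "k \<le> n" "e # inp = [Suc k..<Suc n]"
     "q = filter (\<lambda>v. v \<notin> set out) [1..<Suc k]" "distinct out" "set out \<subseteq> {1..k}" by blast
  from k(2) have e: "e = Suc k"
    using upt_eq_Cons_conv[of "Suc k" "Suc n" e inp] by auto
  have lb: "LB out q L" and pn: "PN out" using push.IH by auto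
  let ?L' = "L \<union> (if (\<exists>y\<in>set q. locked q L y)
                 then {(e, R) | R. \<exists>y\<in>set q. (y, R) \<in> L \<and> R \<inter> set q \<noteq> {}}
                 else {})"
  have "LB out (q @ [e]) ?L'"
    unfolding LB_def
  proof (intro allI impI)
    fix s r z
    assume h: "s < length out" "r < s" "out ! s < z" "z < out ! r" "z \<notin> set (take (Suc s) out)"
      "Rs out s \<inter> set (q @ [e]) \<noteq> {}"
    have "out ! s \<in> set out" using h(1) by simp
    then have "out ! s \<le> k" using k(5) by auto
    then have "e \<notin> Rs out s" using e unfolding Rs_def by auto
    then have ne: "Rs out s \<inter> set q \<noteq> {}" using h(6) by auto
    then have zq: "z \<in> set q" and lq: "\<forall>y\<in>set q. out ! s < y \<longrightarrow> (y, Rs out s) \<in> L"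
      using lb h unfolding LB_def by blast+
    have zl: "(z, Rs out s) \<in> L" using lq zq h(3) by blast
    then have "locked q L z" using ne unfolding locked_def by blast
    then have "(e, Rs out s) \<in> ?L'" using zq zl ne by auto
    then show "z \<in> set (q @ [e]) \<and> (\<forall>y\<in>set (q @ [e]). out ! s < y \<longrightarrow> (y, Rs out s) \<in> ?L')"
      using zq lq by auto
  qed
  then show ?case using pn by simp
next
  case (pop inp fr x bk out L)
  let ?q = "fr @ x # bk"
  from basic[OF pop.hyps(1)] obtain k where k: "k \<le> n" "inp = [Suc k..<Suc n]"
     "?q = filter (\<lambda>v. v \<notin> set out) [1..<Suc k]" "distinct out" "set out \<subseteq> {1..k}" by metis
  have lb: "LB out ?q L" and pn: "PN out" using pop.IH by auto
  have srt: "sorted_wrt (<) ?q" using sorted_q k(3) by metis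
  note sp = split_sorted[OF srt]
  have sq: "set ?q = {v. 1 \<le> v \<and> v \<le> k \<and> v \<notin> set out}" using k(3) set_q by metis
  have xk: "1 \<le> x" "x \<le> k" "x \<notin> set out" using sq by auto
  have C: False if "s < length out" "r < s" "out ! s < z" "z < out ! r" "z \<notin> set (take (Suc s) out)"
      "a \<in> Rs out s" "a \<in> set ?q" "out ! s < x" for s r z a
    using blocked[OF k(3) k(5) lb refl that] pop.hyps(2) by auto
  have outk: "out ! s \<le> k" if "s < length out" for s
    using that k(5) nth_mem[OF that] by fastforce
  have PN': "PN (out @ [x])"
    unfolding PN_def
  proof
    assume "\<exists>r s t z a. r < s \<and> s < t \<and> t < length (out @ [x]) \<and> (out @ [x]) ! s < z \<and> z < (out @ [x]) ! r \<and>
      z \<notin> set (take (Suc s) (out @ [x])) \<and> (out @ [x]) ! s < (out @ [x]) ! t \<and> 0 < a \<and> a < (out @ [x]) ! s \<and>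
      a \<notin> set (take (Suc t) (out @ [x]))"
    then obtain r s t z a where h: "r < s" "s < t" "t < length (out @ [x])" "(out @ [x]) ! s < z" "z < (out @ [x]) ! r"
      "z \<notin> set (take (Suc s) (out @ [x]))" "(out @ [x]) ! s < (out @ [x]) ! t" "0 < a" "a < (out @ [x]) ! s"
      "a \<notin> set (take (Suc t) (out @ [x]))" by blast
    have sl: "s < length out" "r < length out" using h by auto
    show False
    proof (cases "t < length out")
      case True
      have "out ! s < z" "z < out ! r" "z \<notin> set (take (Suc s) out)" "out ! s < out ! t"
        "a < out ! s" "a \<notin> set (take (Suc t) out)"
        using h sl True by (simp_all add: app_nth app_take)
      then show False using pn h(1,2,8) True unfolding PN_def by blast
    next
      case False
      then have t: "t = length out" using h(3) by simp
      have hx: "(out @ [x]) ! t = x" using t by simp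
      have "a \<notin> set out" using h(10) t by simp
      moreover have "a \<le> k" using h(9) outk[OF sl(1)] app_nth[OF sl(1)] by simp
      ultimately have aq: "a \<in> set ?q" using sq h(8) by simp
      have "a \<in> Rs out s" unfolding Rs_def using h(8,9) app_nth[OF sl(1)] \<open>a \<notin> set out\<close>
        using in_set_takeD by fastforce
      then show False using C[OF sl(1) h(1), of z a] h(4,5,6,7) aq hx
        by (simp add: app_nth[OF sl(1)] app_nth[OF sl(2)] app_take[OF sl(1)])
    qed
  qed
  let ?L' = "L \<union> {(y, set fr) | y. y \<in> set bk}"
  have "LB (out @ [x]) (fr @ bk) ?L'"
    unfolding LB_def
  proof (intro allI impI)
    fix s r z
    assume h: "s < length (out @ [x])" "r < s" "(out @ [x]) ! s < z" "z < (out @ [x]) ! r"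
      "z \<notin> set (take (Suc s) (out @ [x]))" "Rs (out @ [x]) s \<inter> set (fr @ bk) \<noteq> {}"
    show "z \<in> set (fr @ bk) \<and> (\<forall>y\<in>set (fr @ bk). (out @ [x]) ! s < y \<longrightarrow> (y, Rs (out @ [x]) s) \<in> ?L')"
    proof (cases "s < length out")
      case True
      have rl: "r < length out" using True h(2) by simp
      have h': "out ! s < z" "z < out ! r" "z \<notin> set (take (Suc s) out)"
        using h(3,4,5) by (simp_all add: app_nth[OF True] app_nth[OF rl] app_take[OF True])
      obtain a where a: "a \<in> Rs out s" "a \<in> set (fr @ bk)" using h(6) app_Rs[OF True] by auto
      have aq: "a \<in> set ?q" using a(2) by auto
      have ne: "Rs out s \<inter> set ?q \<noteq> {}" using a aq by auto
      have zq: "z \<in> set ?q" and lq: "\<forall>y\<in>set ?q. out ! s < y \<longrightarrow> (y, Rs out s) \<in> L"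
        using lb True h(2) h' ne unfolding LB_def by blast+
      have "z \<noteq> x" using C[OF True h(2) h' a(1) aq] h'(1) by auto
      then have "z \<in> set (fr @ bk)" using zq by auto
      then show ?thesis using lq app_Rs[OF True] app_nth[OF True] by auto
    next
      case False
      then have s: "s = length out" using h(1) by simp
      have rl: "r < length out" using s h(2) by simp
      have hx: "(out @ [x]) ! s = x" using s by simp
      have z: "x < z" "z < out ! r" "z \<notin> set out" "z \<noteq> x"
        using h(3,4,5) hx s app_nth[OF rl] by auto
      have "z \<le> k" using z(2) outk[OF rl] by simp
      then have "z \<in> set ?q" using sq z xk by auto
      then have zfb: "z \<in> set (fr @ bk)" using z(4) by auto
      have rs: "Rs (out @ [x]) s = set fr"
      proof
        show "Rs (out @ [x]) s \<subseteq> set fr"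
        proof
          fix v assume "v \<in> Rs (out @ [x]) s"
          then have v: "0 < v" "v < x" "v \<notin> set out" unfolding Rs_def using s hx by auto
          then have "v \<in> set ?q" using sq xk by auto
          then show "v \<in> set fr" using v(2) sp(2) by auto
        qed
      next
        show "set fr \<subseteq> Rs (out @ [x]) s"
        proof
          fix v assume v: "v \<in> set fr"
          then have "v \<in> set ?q" by simp
          then show "v \<in> Rs (out @ [x]) s" unfolding Rs_def using s hx sq v sp(1) by auto
        qed
      qed
      have "\<forall>y\<in>set (fr @ bk). x < y \<longrightarrow> (y, set fr) \<in> ?L'"
        using sp(1) by auto
      then show ?thesis using zfb rs hx by simp
    qed
  qed
  then show ?case using PN' by simp
qed

lemma output_PN: "sljq_output n \<pi> \<Longrightarrow> PN \<pi>"
  unfolding sljq_output_def using inv1 by blast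


declare upt_Suc[simp del]

fun pm :: "nat list \<Rightarrow> nat" where
  "pm [] = 0"
| "pm (x # xs) = max x (pm xs)"

lemma pm_app: "pm (xs @ [x]) = max (pm xs) x"
  by (induction xs) auto

lemma pm_ge: "v \<in> set xs \<Longrightarrow> v \<le> pm xs"
  by (induction xs) auto

lemma pm_in: "pm xs = 0 \<or> pm xs \<in> set xs"
  by (induction xs) (auto simp: max_def)

definition UB :: "nat list \<Rightarrow> nat list \<Rightarrow> (nat \<times> nat set) set \<Rightarrow> bool" where
  "UB out q L \<longleftrightarrow> (\<forall>y R. (y, R) \<in> L \<longrightarrow> R \<inter> set q \<noteq> {} \<longrightarrow>
     (\<exists>s<length out. \<exists>r<s. \<exists>z. out ! s < z \<and> z < out ! r \<and> z \<notin> set (take (Suc s) out)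
        \<and> R = Rs out s \<and> out ! s < y))"

definition RB :: "nat \<Rightarrow> (nat \<times> nat set) set \<Rightarrow> bool" where
  "RB k L \<longleftrightarrow> (\<forall>y R. (y, R) \<in> L \<longrightarrow> R \<subseteq> {..k})"

abbreviation qq :: "nat list \<Rightarrow> nat \<Rightarrow> nat list" where
  "qq out k \<equiv> filter (\<lambda>v. v \<notin> set out) [1..<Suc k]"

lemma push_one:
  assumes r: "sljq_reach n [Suc m..<Suc n] (qq out m) out L" and ub: "UB out (qq out m) L"
    and rb: "RB m L" and so: "set out \<subseteq> {1..m}" and mn: "m < n"
  shows "\<exists>L'. sljq_reach n [Suc (Suc m)..<Suc n] (qq out (Suc m)) out L' \<and>
     UB out (qq out (Suc m)) L' \<and> RB (Suc m) L'"
proof -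
  let ?q = "qq out m"
  have u: "[Suc m..<Suc n] = Suc m # [Suc (Suc m)..<Suc n]" using mn upt_conv_Cons by simp
  let ?L' = "L \<union> (if (\<exists>y\<in>set ?q. locked ?q L y)
                 then {(Suc m, R) | R. \<exists>y\<in>set ?q. (y, R) \<in> L \<and> R \<inter> set ?q \<noteq> {}}
                 else {})"
  have r2: "sljq_reach n [Suc (Suc m)..<Suc n] (?q @ [Suc m]) out ?L'"
  proof -
    have r': "sljq_reach n (Suc m # [Suc (Suc m)..<Suc n]) ?q out L" using r unfolding u .
    show ?thesis by (rule sljq_reach.push[OF r'])
  qed
  have "Suc m \<notin> set out" using so by auto
  then have qe: "?q @ [Suc m] = qq out (Suc m)" by (simp add: upt_Suc)
  have ub2: "UB out (qq out (Suc m)) ?L'"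
    unfolding UB_def
  proof (intro allI impI)
    fix y R assume h: "(y, R) \<in> ?L'" "R \<inter> set (qq out (Suc m)) \<noteq> {}"
    show "\<exists>s<length out. \<exists>r<s. \<exists>z. out ! s < z \<and> z < out ! r \<and> z \<notin> set (take (Suc s) out)
        \<and> R = Rs out s \<and> out ! s < y"
    proof (cases "(y, R) \<in> L")
      case True
      then have "R \<subseteq> {..m}" using rb unfolding RB_def by blast
      then have "R \<inter> set ?q \<noteq> {}"
      proof -
        from h(2) obtain v where v: "v \<in> R" "v \<in> set (qq out (Suc m))" by blast
        have "v \<le> m" using \<open>R \<subseteq> {..m}\<close> v(1) by auto
        then have "v \<in> set ?q" using v(2) by auto
        then show ?thesis using v(1) by blast
      qed
      then show ?thesis using ub True unfolding UB_def by blast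
    next
      case False
      then obtain y' where y': "y = Suc m" "y' \<in> set ?q" "(y', R) \<in> L" "R \<inter> set ?q \<noteq> {}"
        using h(1) by (auto split: if_splits)
      then obtain s r z where w: "s<length out" "r<s" "out ! s < z" "z < out ! r" "z \<notin> set (take (Suc s) out)"
        "R = Rs out s" "out ! s < y'" using ub unfolding UB_def by blast
      have "y' \<le> m" using y'(2) by simp
      then show ?thesis using w y'(1) by (intro exI[of _ s]) auto
    qed
  qed
  have "RB (Suc m) ?L'" unfolding RB_def
  proof (intro allI impI)
    fix y R assume "(y, R) \<in> ?L'"
    then obtain y' where "(y', R) \<in> L" by (auto split: if_splits)
    then have "R \<subseteq> {..m}" using rb unfolding RB_def by blast
    then show "R \<subseteq> {..Suc m}" by auto
  qed
  moreover have "sljq_reach n [Suc (Suc m)..<Suc n] (qq out (Suc m)) out ?L'" using r2 unfolding qe .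
  ultimately show ?thesis using ub2 by blast
qed

lemma push_many:
  assumes "sljq_reach n [Suc k..<Suc n] (qq out k) out L" "UB out (qq out k) L"
    "RB k L" "set out \<subseteq> {1..k}" "k \<le> m" "m \<le> n"
  shows "\<exists>L'. sljq_reach n [Suc m..<Suc n] (qq out m) out L' \<and> UB out (qq out m) L' \<and> RB m L'"
  using assms(5,6)
proof (induction m rule: dec_induct)
  case base
  then show ?case using assms by blast
next
  case (step m)
  then obtain L' where "sljq_reach n [Suc m..<Suc n] (qq out m) out L'" "UB out (qq out m) L'" "RB m L'"
    by auto
  moreover have "set out \<subseteq> {1..m}" using assms(4) step(1) by auto
  ultimately show ?case using push_one step(2,4) by simp
qed

lemma pop_lazy:
  assumes pn: "PN \<pi>" and dist: "distinct \<pi>" and sp: "set \<pi> = {1..n}" and t: "t < length \<pi>"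
    and m: "m = max (pm (take t \<pi>)) (\<pi> ! t)"
    and r: "sljq_reach n [Suc m..<Suc n] (qq (take t \<pi>) m) (take t \<pi>) L"
    and ub: "UB (take t \<pi>) (qq (take t \<pi>) m) L" and rb: "RB m L"
  shows "\<exists>L'. sljq_reach n [Suc m..<Suc n] (qq (take (Suc t) \<pi>) m) (take (Suc t) \<pi>) L' \<and>
     UB (take (Suc t) \<pi>) (qq (take (Suc t) \<pi>) m) L' \<and> RB m L'"
proof -
  define out where "out = take t \<pi>"
  define x where "x = \<pi> ! t"
  define k where "k = pm out"
  let ?q = "qq out m"
  have lo: "length out = t" using t out_def by simp
  have ts: "take (Suc t) \<pi> = out @ [x]" using t out_def x_def by (simp add: take_Suc_conv_app_nth)
  have "distinct (out @ [x])" using dist ts by (metis distinct_take)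
  then have xo: "x \<notin> set out" by simp
  have "x \<in> set \<pi>" using t x_def by simp
  then have x1: "1 \<le> x" using sp by auto
  have xm: "x \<le> m" using m x_def by simp
  have sq: "set ?q = {v. 1 \<le> v \<and> v \<le> m \<and> v \<notin> set out}" by auto
  have "x \<in> set ?q" using sq x1 xm xo by auto
  then obtain fr bk where qs: "?q = fr @ x # bk" by (meson split_list)
  have srt: "sorted_wrt (<) (fr @ x # bk)" using sorted_q qs by metis
  note spl = split_sorted[OF srt]
  have outnth: "out ! s = \<pi> ! s" if "s < t" for s using that out_def by simp
  have outtake: "take (Suc s) out = take (Suc s) \<pi>" if "s < t" for s using that out_def by simp
  have ok: "fr = [] \<or> \<not> locked ?q L x"
  proof (rule ccontr)
    assume "\<not> (fr = [] \<or> \<not> locked ?q L x)"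
    then obtain R where R: "(x, R) \<in> L" "R \<inter> set ?q \<noteq> {}" unfolding locked_def by auto
    then obtain s r z where w: "s<length out" "r<s" "out ! s < z" "z < out ! r" "z \<notin> set (take (Suc s) out)"
        "R = Rs out s" "out ! s < x" using ub out_def unfolding UB_def by blast
    obtain a where a: "a \<in> Rs out s" "a \<in> set ?q" using R(2) w(6) by auto
    have a2: "0 < a" "a < out ! s" "a \<notin> set out" using a sq unfolding Rs_def by auto
    have "a \<notin> set (take (Suc t) \<pi>)" using ts a2 w(7) by auto
    moreover have "s < t" "r < t" using w lo by auto
    ultimately have "r < s \<and> s < t \<and> t < length \<pi> \<and> \<pi> ! s < z \<and> z < \<pi> ! r \<and>
      z \<notin> set (take (Suc s) \<pi>) \<and> \<pi> ! s < \<pi> ! t \<and> 0 < a \<and> a < \<pi> ! s \<and>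
      a \<notin> set (take (Suc t) \<pi>)"
      using w a2 t outnth outtake x_def by auto
    then show False using pn unfolding PN_def by blast
  qed
  let ?L' = "L \<union> {(y, set fr) | y. y \<in> set bk}"
  have r0: "sljq_reach n [Suc m..<Suc n] ?q out L" using r unfolding out_def .
  have r': "sljq_reach n [Suc m..<Suc n] (fr @ x # bk) out L" using r0 unfolding qs .
  have ok': "fr = [] \<or> \<not> locked (fr @ x # bk) L x" using ok unfolding qs .
  have r2: "sljq_reach n [Suc m..<Suc n] (fr @ bk) (out @ [x]) ?L'"
    by (rule sljq_reach.pop[OF r' ok'])
  have "distinct [1..<Suc m]" by simp
  from filter_remove[OF qs this] have qe: "fr @ bk = qq (out @ [x]) m"
    by (simp add: conj_commute)
  have sfr: "set fr = Rs (out @ [x]) (length out)"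
  proof
    show "Rs (out @ [x]) (length out) \<subseteq> set fr"
    proof
      fix v assume "v \<in> Rs (out @ [x]) (length out)"
      then have v: "0 < v" "v < x" "v \<notin> set out" unfolding Rs_def by auto
      then have "v \<in> set ?q" using sq xm by auto
      then have "v \<in> set (fr @ x # bk)" using qs by metis
      then show "v \<in> set fr" using v(2) spl(2) by auto
    qed
  next
    show "set fr \<subseteq> Rs (out @ [x]) (length out)"
    proof
      fix v assume v: "v \<in> set fr"
      then have "v \<in> set ?q" using qs by simp
      then show "v \<in> Rs (out @ [x]) (length out)" unfolding Rs_def using sq v spl(1) by auto
    qed
  qed
  have ub2: "UB (out @ [x]) (fr @ bk) ?L'"
    unfolding UB_def
  proof (intro allI impI)
    fix y R assume h: "(y, R) \<in> ?L'" "R \<inter> set (fr @ bk) \<noteq> {}"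
    show "\<exists>s<length (out @ [x]). \<exists>r<s. \<exists>z. (out @ [x]) ! s < z \<and> z < (out @ [x]) ! r \<and>
       z \<notin> set (take (Suc s) (out @ [x])) \<and> R = Rs (out @ [x]) s \<and> (out @ [x]) ! s < y"
    proof (cases "(y, R) \<in> L")
      case True
      have "R \<inter> set ?q \<noteq> {}" using h(2) qs by auto
      then obtain s r z where w: "s<length out" "r<s" "out ! s < z" "z < out ! r" "z \<notin> set (take (Suc s) out)"
        "R = Rs out s" "out ! s < y" using ub out_def True unfolding UB_def by blast
      have rl: "r < length out" using w by simp
      have "s < length (out @ [x]) \<and> r < s \<and> (out @ [x]) ! s < z \<and> z < (out @ [x]) ! r \<and>
       z \<notin> set (take (Suc s) (out @ [x])) \<and> R = Rs (out @ [x]) s \<and> (out @ [x]) ! s < y"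
        using w app_nth[OF w(1)] app_nth[OF rl] app_take[OF w(1)] app_Rs[OF w(1)] by auto
      then show ?thesis by blast
    next
      case False
      then have y: "y \<in> set bk" "R = set fr" using h(1) by auto
      then have yx: "x < y" using spl by auto
      have "y \<in> set ?q" using y qs by simp
      then have y2: "y \<le> m" "y \<notin> set out" using sq by auto
      then have yk: "y \<le> k" using m yx k_def out_def x_def by simp
      then have "k \<noteq> 0" using yx by simp
      then have "k \<in> set out" using pm_in k_def by metis
      then obtain r where r: "r < length out" "out ! r = k" by (metis in_set_conv_nth)
      have "y \<noteq> k" using y2 \<open>k \<in> set out\<close> by auto
      then have "y < out ! r" using yk r by simp
      then have "length out < length (out @ [x]) \<and> r < length out \<and> (out @ [x]) ! length out < y \<and>
        y < (out @ [x]) ! r \<and> y \<notin> set (take (Suc (length out)) (out @ [x])) \<and>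
        R = Rs (out @ [x]) (length out) \<and> (out @ [x]) ! length out < y"
        using r yx y2 y sfr app_nth[OF r(1)] by auto
      then show ?thesis by blast
    qed
  qed
  have "set fr \<subseteq> set ?q" using qs by auto
  then have "set fr \<subseteq> {..m}" using sq by auto
  then have "RB m ?L'" using rb unfolding RB_def by auto
  moreover have "sljq_reach n [Suc m..<Suc n] (qq (take (Suc t) \<pi>) m) (take (Suc t) \<pi>) ?L'"
    using r2 unfolding qe ts .
  moreover have "UB (take (Suc t) \<pi>) (qq (take (Suc t) \<pi>) m) ?L'"
    using ub2 unfolding qe ts .
  ultimately show ?thesis by blast
qed

lemma lazy_reach:
  assumes pn: "PN \<pi>" and dist: "distinct \<pi>" and sp: "set \<pi> = {1..n}"
  shows "t \<le> length \<pi> \<Longrightarrow> \<exists>L. sljq_reach n [Suc (pm (take t \<pi>))..<Suc n] (qq (take t \<pi>) (pm (take t \<pi>))) (take t \<pi>) L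
     \<and> UB (take t \<pi>) (qq (take t \<pi>) (pm (take t \<pi>))) L \<and> RB (pm (take t \<pi>)) L"
proof (induction t)
  case 0
  have "sljq_reach n [1..<Suc n] [] [] {}" by (rule sljq_reach.init)
  then show ?case by (intro exI[of _ "{}"]) (simp add: UB_def RB_def)
next
  case (Suc t)
  then have t: "t < length \<pi>" by simp
  define k where "k = pm (take t \<pi>)"
  define x where "x = \<pi> ! t"
  define m where "m = max k x"
  obtain L where L: "sljq_reach n [Suc k..<Suc n] (qq (take t \<pi>) k) (take t \<pi>) L"
     "UB (take t \<pi>) (qq (take t \<pi>) k) L" "RB k L" using Suc t k_def by auto
  have xin: "x \<in> set \<pi>" using t x_def by simp
  then have xn: "x \<le> n" using sp by auto
  have "\<forall>v\<in>set (take t \<pi>). 1 \<le> v \<and> v \<le> n" using sp by (auto dest: in_set_takeD)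
  then have so: "set (take t \<pi>) \<subseteq> {1..k}" using pm_ge k_def by fastforce
  have "k \<le> n" using pm_in[of "take t \<pi>"] \<open>\<forall>v\<in>set (take t \<pi>). 1 \<le> v \<and> v \<le> n\<close> k_def by auto
  then have mn: "m \<le> n" using xn m_def by simp
  obtain L' where L': "sljq_reach n [Suc m..<Suc n] (qq (take t \<pi>) m) (take t \<pi>) L'"
     "UB (take t \<pi>) (qq (take t \<pi>) m) L'" "RB m L'"
    using push_many[OF L so _ mn] m_def by auto
  have pmS: "pm (take (Suc t) \<pi>) = m"
    using t by (simp add: take_Suc_conv_app_nth pm_app k_def x_def m_def)
  have mdef: "m = max (pm (take t \<pi>)) (\<pi> ! t)" using m_def k_def x_def by simp
  obtain L'' where "sljq_reach n [Suc m..<Suc n] (qq (take (Suc t) \<pi>) m) (take (Suc t) \<pi>) L'' \<and>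
     UB (take (Suc t) \<pi>) (qq (take (Suc t) \<pi>) m) L'' \<and> RB m L''"
    using pop_lazy[OF pn dist sp t mdef L'] by blast
  then show ?case unfolding pmS by blast
qed

lemma PN_output:
  assumes pn: "PN \<pi>" and dist: "distinct \<pi>" and sp: "set \<pi> = {1..n}"
  shows "sljq_output n \<pi>"
proof -
  from lazy_reach[OF assms, of "length \<pi>"] obtain L where
    L: "sljq_reach n [Suc (pm \<pi>)..<Suc n] (qq \<pi> (pm \<pi>)) \<pi> L" by auto
  have "pm \<pi> = n"
  proof (cases "n = 0")
    case True
    then have "\<pi> = []" using sp by simp
    then show ?thesis using True by simp
  next
    case False
    then have "n \<in> set \<pi>" using sp by simp
    then have "n \<le> pm \<pi>" by (rule pm_ge)
    moreover have "pm \<pi> \<le> n" using pm_in[of \<pi>] sp by auto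
    ultimately show ?thesis by simp
  qed
  moreover have "qq \<pi> n = []" using sp by (auto simp: filter_empty_conv)
  ultimately show ?thesis using L unfolding sljq_output_def by auto
qed


lemma lt4: "(i::nat) < 4 \<longleftrightarrow> i = 0 \<or> i = 1 \<or> i = 2 \<or> i = 3" by auto
lemma lt5: "(i::nat) < 5 \<longleftrightarrow> i = 0 \<or> i = 1 \<or> i = 2 \<or> i = 3 \<or> i = 4" by auto

lemma all4: "(\<forall>i::nat. i < 4 \<longrightarrow> P i) \<longleftrightarrow> (P 0 \<and> P 1 \<and> P 2 \<and> P 3)"
proof
  assume "\<forall>i::nat. i < 4 \<longrightarrow> P i" then show "P 0 \<and> P 1 \<and> P 2 \<and> P 3" by simp
next
  assume "P 0 \<and> P 1 \<and> P 2 \<and> P 3" then show "\<forall>i::nat. i < 4 \<longrightarrow> P i" using lt4 by auto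
qed

lemma all5: "(\<forall>i::nat. i < 5 \<longrightarrow> P i) \<longleftrightarrow> (P 0 \<and> P 1 \<and> P 2 \<and> P 3 \<and> P 4)"
proof
  assume "\<forall>i::nat. i < 5 \<longrightarrow> P i" then show "P 0 \<and> P 1 \<and> P 2 \<and> P 3 \<and> P 4" by simp
next
  assume "P 0 \<and> P 1 \<and> P 2 \<and> P 3 \<and> P 4" then show "\<forall>i::nat. i < 5 \<longrightarrow> P i" using lt5 by auto
qed

lemma mk4231:
  assumes "r < s" "s < c" "c < u" "u < length p" "p!u < p!s" "p!s < p!c" "p!c < p!r"
  shows "contains_pattern p [4,2,3,1]"
  unfolding contains_pattern_def strict_mono_on_def Ball_def lessThan_iff
  apply (rule exI[of _ "\<lambda>i. [r,s,c,u] ! i"])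
  using assms by (auto simp: less_Suc_eq)

lemma mk42513:
  assumes "r < s" "s < t" "t < u" "u < pp" "pp < length p"
    "p!u < p!s" "p!s < p!pp" "p!pp < p!r" "p!r < p!t"
  shows "contains_pattern p [4,2,5,1,3]"
  unfolding contains_pattern_def strict_mono_on_def Ball_def lessThan_iff
  apply (rule exI[of _ "\<lambda>i. [r,s,t,u,pp] ! i"])
  using assms by (auto simp: less_Suc_eq)

lemma get4231:
  assumes "contains_pattern p [4,2,3,1]"
  shows "\<exists>r s c u. r < s \<and> s < c \<and> c < u \<and> u < length p \<and> p!u < p!s \<and> p!s < p!c \<and> p!c < p!r"
proof -
  obtain f where f: "strict_mono_on {..<length [4,2,3,1::nat]} f" "\<forall>r<length [4,2,3,1::nat]. f r < length p"
    "\<forall>r<length [4,2,3,1::nat]. \<forall>s<length [4,2,3,1::nat]. (p ! f r < p ! f s) = ([4,2,3,1::nat] ! r < [4,2,3,1] ! s)"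
    using assms unfolding contains_pattern_def by blast
  have m: "f 0 < f 1" "f 1 < f 2" "f 2 < f 3" using f(1) unfolding strict_mono_on_def by auto
  have l: "f 3 < length p" using f(2) by auto
  have "p ! f 3 < p ! f 1" using f(3)[rule_format, of 3 1] by simp
  moreover have "p ! f 1 < p ! f 2" using f(3)[rule_format, of 1 2] by simp
  moreover have "p ! f 2 < p ! f 0" using f(3)[rule_format, of 2 0] by simp
  ultimately show ?thesis using m l by blast
qed

lemma get42513:
  assumes "contains_pattern p [4,2,5,1,3]"
  shows "\<exists>r s t u pp. r < s \<and> s < t \<and> t < u \<and> u < pp \<and> pp < length p \<and>
    p!u < p!s \<and> p!s < p!pp \<and> p!pp < p!r \<and> p!r < p!t"
proof -
  obtain f where f: "strict_mono_on {..<length [4,2,5,1,3::nat]} f" "\<forall>r<length [4,2,5,1,3::nat]. f r < length p"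
    "\<forall>r<length [4,2,5,1,3::nat]. \<forall>s<length [4,2,5,1,3::nat]. (p ! f r < p ! f s) = ([4,2,5,1,3::nat] ! r < [4,2,5,1,3] ! s)"
    using assms unfolding contains_pattern_def by blast
  have m: "f 0 < f 1" "f 1 < f 2" "f 2 < f 3" "f 3 < f 4" using f(1) unfolding strict_mono_on_def by auto
  have l: "f 4 < length p" using f(2) by auto
  have "p ! f 3 < p ! f 1" using f(3)[rule_format, of 3 1] by simp
  moreover have "p ! f 1 < p ! f 4" using f(3)[rule_format, of 1 4] by simp
  moreover have "p ! f 4 < p ! f 0" using f(3)[rule_format, of 4 0] by simp
  moreover have "p ! f 0 < p ! f 2" using f(3)[rule_format, of 0 2] by simp
  ultimately show ?thesis using m l by blast
qed

lemma notin_take: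
  assumes "distinct xs" "c < length xs" "s < c"
  shows "xs ! c \<notin> set (take (Suc s) xs)"
proof
  assume "xs ! c \<in> set (take (Suc s) xs)"
  then obtain j where j: "j < length (take (Suc s) xs)" "take (Suc s) xs ! j = xs ! c"
    by (metis in_set_conv_nth)
  then have "j \<le> s" "j < length xs" "xs ! j = xs ! c" by auto
  then have "j = c" using assms nth_eq_iff_index_eq by metis
  then show False using \<open>j \<le> s\<close> assms by simp
qed

lemma in_take_pos:
  assumes "i < length xs" "xs ! i \<notin> set (take (Suc s) xs)"
  shows "s < i"
proof (rule ccontr)
  assume "\<not> s < i"
  then have "xs ! i = take (Suc s) xs ! i" by simp
  moreover have "i < length (take (Suc s) xs)" using assms \<open>\<not> s < i\<close> by simp
  ultimately show False using assms(2) by (metis nth_mem)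
qed

lemma PN_iff:
  assumes dist: "distinct p" and sp: "set p = {1..n}"
  shows "PN p \<longleftrightarrow> (avoids_pattern p [4,2,3,1] \<and> avoids_pattern p [4,2,5,1,3])"
proof
  assume pn: "PN p"
  have pos: "0 < p ! i" if "i < length p" for i using sp nth_mem[OF that] by auto
  have a1: "\<not> contains_pattern p [4,2,3,1]"
  proof
    assume "contains_pattern p [4,2,3,1]"
    then obtain r s c u where w: "r < s" "s < c" "c < u" "u < length p" "p!u < p!s" "p!s < p!c" "p!c < p!r"
      using get4231 by blast
    have "p ! c \<notin> set (take (Suc s) p)" using notin_take[OF dist] w by simp
    moreover have "p ! u \<notin> set (take (Suc c) p)" using notin_take[OF dist] w by simp
    moreover have "0 < p ! u" using pos w by simp
    moreover have "c < length p" using w by simp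
    ultimately show False using pn w(1,2,5,6,7) unfolding PN_def by blast
  qed
  have a2: "\<not> contains_pattern p [4,2,5,1,3]"
  proof
    assume "contains_pattern p [4,2,5,1,3]"
    then obtain r s t u pp where w: "r < s" "s < t" "t < u" "u < pp" "pp < length p"
      "p!u < p!s" "p!s < p!pp" "p!pp < p!r" "p!r < p!t"
      using get42513 by blast
    have "p ! pp \<notin> set (take (Suc s) p)" using notin_take[OF dist] w by simp
    moreover have "p ! u \<notin> set (take (Suc t) p)" using notin_take[OF dist] w by simp
    moreover have "0 < p ! u" using pos w by simp
    moreover have "p ! s < p ! t" using w by simp
    moreover have "t < length p" using w by simp
    ultimately show False using pn w(1,2,6,7,8) unfolding PN_def by blast
  qed
  show "avoids_pattern p [4,2,3,1] \<and> avoids_pattern p [4,2,5,1,3]"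
    using a1 a2 unfolding avoids_pattern_def by simp
next
  assume av: "avoids_pattern p [4,2,3,1] \<and> avoids_pattern p [4,2,5,1,3]"
  show "PN p" unfolding PN_def
  proof
    assume "\<exists>r s t z a. r < s \<and> s < t \<and> t < length p \<and> p ! s < z \<and> z < p ! r \<and>
      z \<notin> set (take (Suc s) p) \<and> p ! s < p ! t \<and> 0 < a \<and> a < p ! s \<and>
      a \<notin> set (take (Suc t) p)"
    then obtain r s t z a where w: "r < s" "s < t" "t < length p" "p ! s < z" "z < p ! r"
      "z \<notin> set (take (Suc s) p)" "p ! s < p ! t" "0 < a" "a < p ! s" "a \<notin> set (take (Suc t) p)"
      by blast
    have rl: "r < length p" using w by simp
    have "p ! r \<le> n" using sp nth_mem[OF rl] by auto
    then have "z \<in> set p" using sp w by auto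
    then obtain pp where pp: "pp < length p" "p ! pp = z" by (metis in_set_conv_nth)
    have sl: "s < length p" using w by simp
    have "a \<le> n" using sp nth_mem[OF sl] w by auto
    then have "a \<in> set p" using sp w by auto
    then obtain u where u: "u < length p" "p ! u = a" by (metis in_set_conv_nth)
    have spp: "s < pp" using in_take_pos[of pp p s] pp w(6) by simp
    have tu: "t < u" using in_take_pos[of u p t] u w(10) by simp
    have c1: "\<not> contains_pattern p [4,2,3,1]" and c2: "\<not> contains_pattern p [4,2,5,1,3]"
      using av unfolding avoids_pattern_def by auto
    show False
    proof (cases "p ! t < p ! r")
      case True
      then show False using mk4231[of r s t u p] c1 w u tu by simp
    next
      case False
      have "t \<noteq> r" using w by simp
      then have "p ! t \<noteq> p ! r" using dist w rl nth_eq_iff_index_eq by metis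
      then have rt: "p ! r < p ! t" using False by simp
      have "pp \<noteq> u" using pp u w by auto
      show False
      proof (cases "pp < u")
        case True
        then show False using mk4231[of r s pp u p] c1 w u pp spp by simp
      next
        case False
        then have "u < pp" using \<open>pp \<noteq> u\<close> by simp
        then show False using mk42513[of r s t u pp p] c2 w u pp tu rt by simp
      qed
    qed
  qed
qed

theorem mainTheorem3:
  fixes n :: nat and \<pi> :: "nat list"
  assumes "distinct \<pi>" and "set \<pi> = {1..n}"
  shows "sljq_output n \<pi> \<longleftrightarrow>
           (avoids_pattern \<pi> [4,2,3,1] \<and> avoids_pattern \<pi> [4,2,5,1,3])"
  using output_PN PN_output[OF _ assms] PN_iff[OF assms] by blast

end
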